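(* Let $P_{(\cdot)}$ be an irreducible $G$-stochastic function on $\mathcal A\subset\mathbb N_+$, $G$ finite, with $\gcd(\mathcal A)=1$. Then all states have the same period: $d_i=\hat d$ for all $i\in G$, for some $\hat d\in\mathbb N_+$. Moreover there is a partition $\{G_h: h=0,\dots,\hat d-1\}$ of $G$ such that for every word $\mathbf b\in\mathcal A^*$, $P_{\mathbf b}(i,j)>0$ and $i\in G_h$ imply $j\in G_{h+s(\mathbf b)}$, indices taken modulo $\hat d$.
   Context: A $G$-stochastic function is a map $k\mapsto P_{(k)}$ from $\mathcal A$ to stochastic matrices on $G$. $\mathcal A^*=\bigcup_{n\ge1}\mathcal A^n$; for $\mathbf a=(a_1,\dots,a_n)$, $P_{\mathbf a}=P_{(a_n)}\cdots P_{(a_1)}$ and the depth is $s(\mathbf a)=\sum_i a_i$. $P_{(\cdot)}$ is irreducible if for all $i,j\in G$ there is $\mathbf a\in\mathcal A^*$ with $P_{\mathbf a}(i,j)>0$. The period of $i\in G$ is $d_i=\gcd\, s(\mathcal A_i^* )$, where $\mathcal A_i^*=\{\mathbf a\in\mathcal A^*: P_{\mathbf a}(i,i)>0\}$. *)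

theory Defs
  imports Complex_Main
begin

definition mmult :: "('g::finite \<Rightarrow> 'g \<Rightarrow> real) \<Rightarrow> ('g \<Rightarrow> 'g \<Rightarrow> real) \<Rightarrow> 'g \<Rightarrow> 'g \<Rightarrow> real" where
  "mmult M N i j = (\<Sum>k\<in>UNIV. M i k * N k j)"

definition stochastic :: "('g::finite \<Rightarrow> 'g \<Rightarrow> real) \<Rightarrow> bool" where
  "stochastic M \<longleftrightarrow> (\<forall>i j. 0 \<le> M i j) \<and> (\<forall>i. (\<Sum>j\<in>UNIV. M i j) = 1)"

definition G_stochastic_fun :: "nat set \<Rightarrow> (nat \<Rightarrow> 'g::finite \<Rightarrow> 'g \<Rightarrow> real) \<Rightarrow> bool" where
  "G_stochastic_fun A P \<longleftrightarrow> (\<forall>k\<in>A. stochastic (P k))"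

definition words :: "nat set \<Rightarrow> nat list set" where
  "words A = {w. w \<noteq> [] \<and> set w \<subseteq> A}"

text \<open>For a = [a1,...,an], word_mat P a = P(an) * ... * P(a1).\<close>
fun word_mat :: "(nat \<Rightarrow> 'g::finite \<Rightarrow> 'g \<Rightarrow> real) \<Rightarrow> nat list \<Rightarrow> 'g \<Rightarrow> 'g \<Rightarrow> real" where
  "word_mat P [] = (\<lambda>i j. if i = j then 1 else 0)"
| "word_mat P [a] = P a"
| "word_mat P (a # as) = mmult (word_mat P as) (P a)"

abbreviation depth :: "nat list \<Rightarrow> nat" where
  "depth w \<equiv> sum_list w"

definition irreducible_fun :: "nat set \<Rightarrow> (nat \<Rightarrow> 'g::finite \<Rightarrow> 'g \<Rightarrow> real) \<Rightarrow> bool" where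
  "irreducible_fun A P \<longleftrightarrow> (\<forall>i j. \<exists>w\<in>words A. word_mat P w i j > 0)"

definition period :: "nat set \<Rightarrow> (nat \<Rightarrow> 'g::finite \<Rightarrow> 'g \<Rightarrow> real) \<Rightarrow> 'g \<Rightarrow> nat" where
  "period A P i = Gcd (depth ` {w\<in>words A. word_mat P w i i > 0})"

end

theory Submission
  imports Defs
begin

lemma mmult_Id_left: "mmult (\<lambda>i j. if i = j then 1 else 0) M = M"
proof (rule ext)+
  fix i j
  have "(\<Sum>k\<in>UNIV. (if i = k then 1 else 0) * M k j) = (\<Sum>k\<in>UNIV. if i = k then M k j else 0)"
    by (rule sum.cong) auto
  thus "mmult (\<lambda>i j. if i = j then 1 else 0) M i j = M i j" by (simp add: mmult_def)
qed

lemma mmult_Id_right: "mmult M (\<lambda>i j. if i = j then 1 else 0) = M"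
proof (rule ext)+
  fix i j
  have "(\<Sum>k\<in>UNIV. M i k * (if k = j then 1 else 0)) = (\<Sum>k\<in>UNIV. if k = j then M i k else 0)"
    by (rule sum.cong) auto
  thus "mmult M (\<lambda>i j. if i = j then 1 else 0) i j = M i j" by (simp add: mmult_def)
qed

lemma mmult_assoc: "mmult (mmult X Y) Z = mmult X (mmult Y Z)"
proof (rule ext)+
  fix i j
  show "mmult (mmult X Y) Z i j = mmult X (mmult Y Z) i j"
    unfolding mmult_def sum_distrib_left sum_distrib_right
    by (subst sum.swap) (simp add: mult.assoc)
qed

lemma word_mat_Cons: "word_mat P (a # as) = mmult (word_mat P as) (P a)"
  by (cases as) (auto simp: mmult_Id_left)

lemma word_mat_append: "word_mat P (u @ v) = mmult (word_mat P v) (word_mat P u)"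
proof (induction u)
  case Nil
  then show ?case by (simp add: mmult_Id_right)
next
  case (Cons a u)
  then show ?case by (simp add: word_mat_Cons mmult_assoc)
qed

lemma word_mat_nonneg:
  assumes "G_stochastic_fun A P" "set w \<subseteq> A"
  shows "0 \<le> word_mat P w i j"
  using assms(2)
proof (induction w arbitrary: i j)
  case Nil
  then show ?case by simp
next
  case (Cons a w)
  have "stochastic (P a)" using assms(1) Cons.prems by (auto simp: G_stochastic_fun_def)
  hence pa: "\<And>i j. 0 \<le> P a i j" by (simp add: stochastic_def)
  show ?case using Cons pa
    by (simp add: word_mat_Cons mmult_def sum_nonneg)
qed

lemma mmult_pos:
  assumes "\<And>i j. 0 \<le> X i j" "\<And>i j. 0 \<le> Y i j" "X i k > 0" "Y k j > 0"
  shows "mmult X Y i j > 0"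
proof -
  have "X i k * Y k j \<le> (\<Sum>l\<in>UNIV. X i l * Y l j)"
    by (rule member_le_sum) (auto intro: mult_nonneg_nonneg assms)
  moreover have "X i k * Y k j > 0" using assms by simp
  ultimately show ?thesis unfolding mmult_def by linarith
qed

definition reach :: "nat set \<Rightarrow> (nat \<Rightarrow> 'g::finite \<Rightarrow> 'g \<Rightarrow> real) \<Rightarrow> 'g \<Rightarrow> 'g \<Rightarrow> nat \<Rightarrow> bool" where
  "reach A P i j n \<longleftrightarrow> (\<exists>w\<in>words A. word_mat P w i j > 0 \<and> depth w = n)"

lemma reach_trans:
  assumes "G_stochastic_fun A P" "reach A P i k n" "reach A P k j m"
  shows "reach A P i j (n + m)"
proof -
  obtain w1 where w1: "w1 \<in> words A" "word_mat P w1 i k > 0" "depth w1 = n"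
    using assms(2) by (auto simp: reach_def)
  obtain w2 where w2: "w2 \<in> words A" "word_mat P w2 k j > 0" "depth w2 = m"
    using assms(3) by (auto simp: reach_def)
  have n1: "\<And>i j. 0 \<le> word_mat P w1 i j" using w1(1)
    by (intro word_mat_nonneg[OF assms(1)]) (auto simp: words_def)
  have n2: "\<And>i j. 0 \<le> word_mat P w2 i j" using w2(1)
    by (intro word_mat_nonneg[OF assms(1)]) (auto simp: words_def)
  have "word_mat P (w2 @ w1) i j > 0"
    unfolding word_mat_append using mmult_pos[of "word_mat P w1" "word_mat P w2", OF n1 n2 w1(2) w2(2)] .
  moreover have "w2 @ w1 \<in> words A" using w1 w2 by (auto simp: words_def)
  ultimately show ?thesis using w1 w2 by (auto simp: reach_def)
qed

lemma surj_aux: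
  fixes S :: "nat set" and d :: nat and A :: "nat set"
  assumes d: "d > 0" and S0: "0 \<in> S" and Sd: "S \<subseteq> {0..<d}"
    and cl: "\<And>r a. r \<in> S \<Longrightarrow> a \<in> A \<Longrightarrow> (r + a) mod d \<in> S"
    and g1: "Gcd A = 1"
  shows "S = {0..<d}"
proof -
  define M where "M = {n. \<forall>r\<in>S. (r + n) mod d \<in> S}"
  have rmod: "\<And>r. r \<in> S \<Longrightarrow> r mod d = r" using Sd by auto
  have AM: "A \<subseteq> M" using cl by (auto simp: M_def)
  have addM: "n + m \<in> M" if "n \<in> M" "m \<in> M" for n m
  proof -
    have "(r + (n + m)) mod d \<in> S" if "r \<in> S" for r
    proof -
      have "(r + (n + m)) mod d = ((r + n) mod d + m) mod d"
        by (simp add: mod_add_left_eq add.assoc)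
      thus ?thesis using \<open>n \<in> M\<close> \<open>m \<in> M\<close> that by (auto simp: M_def)
    qed
    thus ?thesis by (auto simp: M_def)
  qed
  have zM: "0 \<in> M" using rmod by (auto simp: M_def)
  have multM: "k * n \<in> M" if "n \<in> M" for k n
    by (induction k) (auto simp: zM addM that)
  have dM: "d \<in> M" using rmod by (auto simp: M_def)
  define g where "g = (LEAST n. 0 < n \<and> n \<in> M)"
  have gex: "0 < g \<and> g \<in> M" unfolding g_def by (rule LeastI[of _ d]) (use d dM in auto)
  have gmin: "\<And>n. 0 < n \<Longrightarrow> n \<in> M \<Longrightarrow> g \<le> n" unfolding g_def by (rule Least_le) auto
  have gdvd: "g dvd a" if aM: "a \<in> M" for a
  proof -
    define q where "q = a div g"
    have qg: "(d - 1) * (q * g) \<in> M" using multM gex by blast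
    have "a mod g \<in> M"
    proof -
      have "(r + a mod g) mod d \<in> S" if "r \<in> S" for r
      proof -
        have eq: "a + (d - 1) * (q * g) = a mod g + d * (q * g)"
        proof -
          have "a = a mod g + q * g" by (simp add: q_def)
          moreover have "q * g + (d - 1) * (q * g) = d * (q * g)" using d
            by (cases d) auto
          ultimately show ?thesis by (metis add.assoc)
        qed
        have "(r + (a + (d - 1) * (q * g))) mod d \<in> S"
          using addM[OF aM qg] that by (auto simp: M_def)
        moreover have "(r + (a + (d - 1) * (q * g))) mod d = (r + a mod g) mod d"
          unfolding eq by (simp add: add.assoc[symmetric])
        ultimately show ?thesis by simp
      qed
      thus ?thesis by (auto simp: M_def)
    qed
    moreover have "a mod g < g" using gex by simp
    ultimately have "a mod g = 0" using gmin by (meson not_le not_gr_zero)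
    thus ?thesis by auto
  qed
  have "g dvd Gcd A" by (rule Gcd_greatest) (use AM gdvd in auto)
  hence "g = 1" using g1 by simp
  hence oneM: "1 \<in> M" using gex by simp
  have "r \<in> S" if "r < d" for r
    using that
  proof (induction r)
    case 0 then show ?case using S0 by simp
  next
    case (Suc r)
    hence "r \<in> S" by simp
    hence "(r + 1) mod d \<in> S" using oneM by (auto simp: M_def)
    thus ?case using Suc.prems by simp
  qed
  thus ?thesis using Sd by auto
qed


lemma period_reach: "period A P i = Gcd {n. reach A P i i n}"
proof -
  have "depth ` {w\<in>words A. word_mat P w i i > 0} = {n. reach A P i i n}"
    by (auto simp: reach_def)
  thus ?thesis by (simp add: period_def)
qed

lemma reach_pos:
  assumes "A \<subseteq> {0<..}" "reach A P i j n" shows "n > 0"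
proof -
  obtain w where w: "w \<in> words A" "depth w = n" using assms(2) by (auto simp: reach_def)
  then obtain a u where "w = a # u" by (cases w) (auto simp: words_def)
  moreover have "a \<in> A" using w \<open>w = a # u\<close> by (auto simp: words_def)
  ultimately show ?thesis using w assms(1) by auto
qed

lemma reach_step:
  assumes "G_stochastic_fun A P" "a \<in> A" shows "\<exists>j. reach A P i j a"
proof -
  have st: "stochastic (P a)" using assms by (auto simp: G_stochastic_fun_def)
  have "\<exists>j. P a i j > 0"
  proof (rule ccontr)
    assume nex: "\<not> (\<exists>j. P a i j > 0)"
    have "P a i j = 0" for j
    proof -
      have "0 \<le> P a i j" using st by (simp add: stochastic_def)
      thus ?thesis using nex by (metis less_eq_real_def)
    qed
    hence "(\<Sum>j\<in>UNIV. P a i j) = 0" by simp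
    thus False using st by (simp add: stochastic_def)
  qed
  then obtain j where "P a i j > 0" by blast
  hence "reach A P i j a" unfolding reach_def
    by (intro bexI[of _ "[a]"]) (use assms(2) in \<open>auto simp: words_def\<close>)
  thus ?thesis by blast
qed

lemma period_dvd:
  assumes "G_stochastic_fun A P" "irreducible_fun A P"
  shows "period A P i dvd period A P j"
proof -
  have irr: "\<And>x y. \<exists>n. reach A P x y n" using assms(2)
    unfolding irreducible_fun_def reach_def by blast
  obtain L where L: "reach A P i j L" using irr by blast
  obtain L' where L': "reach A P j i L'" using irr by blast
  have c0: "reach A P i i (L + L')" by (rule reach_trans[OF assms(1) L L'])
  have "period A P i dvd c" if "reach A P j j c" for c
  proof -
    have "reach A P i i (L + c + L')"
      by (rule reach_trans[OF assms(1) reach_trans[OF assms(1) L that] L'])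
    hence d1: "period A P i dvd L + c + L'" unfolding period_reach by (intro Gcd_dvd) simp
    have d2: "period A P i dvd L + L'" using c0 unfolding period_reach by (intro Gcd_dvd) simp
    have "L + c + L' = c + (L + L')" by simp
    thus ?thesis using d1 d2 by (metis dvd_add_left_iff)
  qed
  thus ?thesis unfolding period_reach[of A P j] by (intro Gcd_greatest) simp
qed

theorem mainTheorem4:
  fixes A :: "nat set" and P :: "nat \<Rightarrow> 'g::finite \<Rightarrow> 'g \<Rightarrow> real"
  assumes "A \<subseteq> {0<..}"
    and "G_stochastic_fun A P"
    and "irreducible_fun A P"
    and "Gcd A = 1"
  shows "\<exists>d::nat. d > 0 \<and> (\<forall>i. period A P i = d) \<and>
    (\<exists>part :: 'g \<Rightarrow> nat. part ` UNIV = {0..<d} \<and>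
       (\<forall>b\<in>words A. \<forall>i j. word_mat P b i j > 0 \<longrightarrow> part j = (part i + depth b) mod d))"
proof -
  have irr: "\<And>x y. \<exists>n. reach A P x y n" using assms(3)
    unfolding irreducible_fun_def reach_def by blast
  obtain i0 :: 'g where True by blast
  define d where "d = period A P i0"
  have alld: "\<forall>i. period A P i = d" unfolding d_def
    using period_dvd[OF assms(2,3)] by (metis dvd_antisym)
  obtain c where c: "reach A P i0 i0 c" using irr by blast
  have "c > 0" by (rule reach_pos[OF assms(1) c])
  have "d dvd c" unfolding d_def period_reach by (intro Gcd_dvd) (simp add: c)
  hence dpos: "d > 0" using \<open>c > 0\<close> by (cases "d = 0") auto
  have cyc: "d dvd n" if "reach A P i0 i0 n" for n
    unfolding d_def period_reach by (intro Gcd_dvd) (simp add: that)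
  define len where "len j = (SOME n. reach A P i0 j n)" for j
  have len: "reach A P i0 j (len j)" for j unfolding len_def by (rule someI_ex) (rule irr)
  define part where "part j = len j mod d" for j
  have key: "part j = (part i + B) mod d" if "reach A P i j B" for i j B
  proof -
    obtain M where M: "reach A P j i0 M" using irr by blast
    have "d dvd len j + M" by (rule cyc, rule reach_trans[OF assms(2) len M])
    moreover have "d dvd len i + B + M"
      by (rule cyc, rule reach_trans[OF assms(2) reach_trans[OF assms(2) len that] M])
    ultimately have "int d dvd int (len i + B + M) - int (len j + M)"
      by (metis dvd_diff int_dvd_int_iff)
    hence "int d dvd int (len i + B) - int (len j)" by simp
    hence "int (len i + B) mod int d = int (len j) mod int d" by (simp add: mod_eq_dvd_iff)
    hence "(len i + B) mod d = len j mod d" by (metis nat_int of_nat_mod)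
    thus ?thesis unfolding part_def by (simp add: mod_add_left_eq)
  qed
  have "part ` UNIV = {0..<d}"
  proof (rule surj_aux[OF dpos _ _ _ assms(4)])
    have "d dvd len i0" by (rule cyc[OF len])
    thus "0 \<in> range part" unfolding part_def by (metis dvd_imp_mod_0 rangeI)
    show "range part \<subseteq> {0..<d}" using dpos by (auto simp: part_def)
    fix r a assume r: "r \<in> range part" and a: "a \<in> A"
    then obtain j where j: "r = part j" by blast
    obtain j' where "reach A P j j' a" using reach_step[OF assms(2) a] by blast
    hence "part j' = (r + a) mod d" using key j by blast
    thus "(r + a) mod d \<in> range part" by (metis rangeI)
  qed
  moreover have "\<forall>b\<in>words A. \<forall>i j. word_mat P b i j > 0 \<longrightarrow> part j = (part i + depth b) mod d"
    using key by (auto simp: reach_def)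
  ultimately show ?thesis using dpos alld by blast
qed

end
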